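(* Let $I\subseteq \mathbb{K}[x_1,\dots,x_n]$ be a square-free monomial ideal which contains no variable. Assume that for some integer $s\geq 1$ the ideal $I^s$ has linear quotients with respect to (the restriction to $G(I^s)$ of) a monomial order. Then $I$ satisfies the strong gcd condition.
   Context: $G(I)$ denotes the set of minimal monomial generators of a monomial ideal $I$. A monomial ideal $I$ satisfies the strong gcd condition if there exists a linear order $\prec$ on $G(I)$ such that for any two monomials $u\prec v$ in $G(I)$ with $\gcd(u,v)=1$ there exists a monomial $w\in G(I)$ with $w\neq u,v$, $u\prec w$ and $w\mid uv$. A monomial order is a multiplicative total order on monomials with $1$ least. If $u_1\prec\dots\prec u_t$ is a linear order on $G(J)$, $J$ has linear quotients with respect to it if for every $2\leq i\leq t$ the ideal $(u_1,\dots,u_{i-1}):u_i$ is generated by a subset of the variables. *)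

theory Defs
  imports Main
begin

text \<open>Monomials in the variables of a finite type 'a (so n = CARD('a)) are exponent
vectors 'a \<Rightarrow> nat; multiplication is pointwise addition, 1 is the zero vector,
divisibility is the pointwise order, gcd is the pointwise minimum (inf).
A monomial ideal of K[x_1..x_n] is identified with the set of monomials it contains
(an upward closed set of exponent vectors); the field K plays no role.\<close>

type_synonym 'a monomial = "'a \<Rightarrow> nat"

definition mmult :: "'a monomial \<Rightarrow> 'a monomial \<Rightarrow> 'a monomial" where
  "mmult u v = (\<lambda>i. u i + v i)"

definition mdvd :: "'a monomial \<Rightarrow> 'a monomial \<Rightarrow> bool" where
  "mdvd u v \<longleftrightarrow> (\<forall>i. u i \<le> v i)"

definition mgcd :: "'a monomial \<Rightarrow> 'a monomial \<Rightarrow> 'a monomial" where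
  "mgcd u v = (\<lambda>i. min (u i) (v i))"

definition mone :: "'a monomial" where
  "mone = (\<lambda>i. 0)"

definition mvar :: "'a \<Rightarrow> 'a monomial" where
  "mvar j = (\<lambda>i. if i = j then 1 else 0)"

definition monomial_ideal :: "'a monomial set \<Rightarrow> bool" where
  "monomial_ideal I \<longleftrightarrow> (\<forall>u\<in>I. \<forall>v. mdvd u v \<longrightarrow> v \<in> I)"

definition mideal :: "'a monomial set \<Rightarrow> 'a monomial set" where
  "mideal S = {v. \<exists>u\<in>S. mdvd u v}"

definition mgens :: "'a monomial set \<Rightarrow> 'a monomial set" where
  "mgens I = {u \<in> I. \<forall>v\<in>I. mdvd v u \<longrightarrow> v = u}"

definition mideal_mult :: "'a monomial set \<Rightarrow> 'a monomial set \<Rightarrow> 'a monomial set" where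
  "mideal_mult I J = mideal {mmult u v | u v. u \<in> I \<and> v \<in> J}"

primrec mideal_pow :: "'a monomial set \<Rightarrow> nat \<Rightarrow> 'a monomial set" where
  "mideal_pow I 0 = mideal {mone}"
| "mideal_pow I (Suc s) = mideal_mult I (mideal_pow I s)"

definition mcolon :: "'a monomial set \<Rightarrow> 'a monomial \<Rightarrow> 'a monomial set" where
  "mcolon I u = {w. mmult w u \<in> I}"

definition squarefree_mideal :: "'a monomial set \<Rightarrow> bool" where
  "squarefree_mideal I \<longleftrightarrow> monomial_ideal I \<and> (\<forall>u\<in>mgens I. \<forall>i. u i \<le> 1)"

definition monomial_order :: "('a monomial \<Rightarrow> 'a monomial \<Rightarrow> bool) \<Rightarrow> bool" where
  "monomial_order mo \<longleftrightarrow>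
     (\<forall>u. \<not> mo u u) \<and>
     (\<forall>u v w. mo u v \<longrightarrow> mo v w \<longrightarrow> mo u w) \<and>
     (\<forall>u v. u \<noteq> v \<longrightarrow> mo u v \<or> mo v u) \<and>
     (\<forall>u v w. mo u v \<longrightarrow> mo (mmult u w) (mmult v w)) \<and>
     (\<forall>u. u \<noteq> mone \<longrightarrow> mo mone u)"

definition strict_linear_on :: "'b set \<Rightarrow> ('b \<Rightarrow> 'b \<Rightarrow> bool) \<Rightarrow> bool" where
  "strict_linear_on A lt \<longleftrightarrow>
     (\<forall>u\<in>A. \<not> lt u u) \<and>
     (\<forall>u\<in>A. \<forall>v\<in>A. \<forall>w\<in>A. lt u v \<longrightarrow> lt v w \<longrightarrow> lt u w) \<and>
     (\<forall>u\<in>A. \<forall>v\<in>A. u \<noteq> v \<longrightarrow> lt u v \<or> lt v u)"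

text \<open>J has linear quotients w.r.t. the restriction of lt to G(J): for every v in G(J)
the ideal generated by the elements of G(J) preceding v, colon v, is generated by
a set of variables (for the first element this is the zero ideal, generated by the
empty set of variables, so including it is harmless).\<close>
definition linear_quotients :: "'a monomial set \<Rightarrow> ('a monomial \<Rightarrow> 'a monomial \<Rightarrow> bool) \<Rightarrow> bool" where
  "linear_quotients J lt \<longleftrightarrow> strict_linear_on (mgens J) lt \<and>
     (\<forall>v\<in>mgens J. \<exists>V. mcolon (mideal {u \<in> mgens J. lt u v}) v = mideal (mvar ` V))"

definition strong_gcd :: "'a monomial set \<Rightarrow> bool" where
  "strong_gcd I \<longleftrightarrow> (\<exists>lt. strict_linear_on (mgens I) lt \<and>
     (\<forall>u\<in>mgens I. \<forall>v\<in>mgens I. lt u v \<and> mgcd u v = mone \<longrightarrow>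
        (\<exists>w\<in>mgens I. w \<noteq> u \<and> w \<noteq> v \<and> lt u w \<and> mdvd w (mmult u v))))"

end

theory Submission
  imports Defs
begin

definition mprod :: "'a monomial list \<Rightarrow> 'a monomial" where
  "mprod ws = foldr mmult ws mone"

definition mpow :: "'a monomial \<Rightarrow> nat \<Rightarrow> 'a monomial" where
  "mpow p n = (\<lambda>k. n * p k)"

lemma mprod_Nil[simp]: "mprod [] = mone" by (simp add: mprod_def)
lemma mprod_Cons[simp]: "mprod (w # ws) = mmult w (mprod ws)" by (simp add: mprod_def)

lemma mmult_comm: "mmult u v = mmult v u" by (auto simp: mmult_def)
lemma mmult_mone[simp]: "mmult mone u = u" by (auto simp: mmult_def mone_def)

lemma mpow_Suc: "mpow p (Suc n) = mmult p (mpow p n)" by (auto simp: mpow_def mmult_def)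

lemma mprod_replicate: "mprod (replicate n p) = mpow p n"
  by (induction n) (auto simp: mpow_def mmult_def mone_def)

lemma mdvd_refl[simp]: "mdvd u u" by (simp add: mdvd_def)
lemma mdvd_trans: "mdvd u v \<Longrightarrow> mdvd v w \<Longrightarrow> mdvd u w"
  by (auto simp: mdvd_def intro: order_trans)
lemma mdvd_antisym: "mdvd u v \<Longrightarrow> mdvd v u \<Longrightarrow> u = v"
  by (auto simp: mdvd_def intro!: ext antisym)

lemma mdvd_mprod: "w \<in> set ws \<Longrightarrow> mdvd w (mprod ws)"
proof (induction ws)
  case (Cons a ws)
  then show ?case by (auto simp: mdvd_def mmult_def) (metis le_add2 order_trans)
qed simp

lemma gen_exists:
  fixes u :: "('a::finite) monomial"
  assumes "u \<in> I" shows "\<exists>g\<in>mgens I. mdvd g u"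
  using assms
proof (induction "\<Sum>k\<in>UNIV. u k" arbitrary: u rule: less_induct)
  case less
  show ?case
  proof (cases "u \<in> mgens I")
    case True then show ?thesis using mdvd_refl by blast
  next
    case False
    then obtain v where v: "v \<in> I" "mdvd v u" "v \<noteq> u" using less.prems by (auto simp: mgens_def)
    then obtain k where "v k \<noteq> u k" by auto
    with v have "v k < u k" by (auto simp: mdvd_def le_less)
    hence "(\<Sum>k\<in>UNIV. v k) < (\<Sum>k\<in>UNIV. u k)"
      using v(2) by (intro sum_strict_mono_ex1) (auto simp: mdvd_def)
    from less.hyps[OF this v(1)] obtain g where "g \<in> mgens I" "mdvd g v" by blast
    then show ?thesis using v(2) mdvd_trans by blast
  qed
qed

lemma pow_struct:
  fixes c :: "('a::finite) monomial"
  assumes "c \<in> mideal_pow I n"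
  shows "\<exists>ws. length ws = n \<and> set ws \<subseteq> mgens I \<and> mdvd (mprod ws) c"
  using assms
proof (induction n arbitrary: c)
  case 0 then show ?case by (auto simp: mideal_def mdvd_def mone_def)
next
  case (Suc n)
  then obtain a b where ab: "a \<in> I" "b \<in> mideal_pow I n" "mdvd (mmult a b) c"
    by (auto simp: mideal_mult_def mideal_def)
  from Suc.IH[OF ab(2)] obtain ws where ws: "length ws = n" "set ws \<subseteq> mgens I" "mdvd (mprod ws) b"
    by blast
  from gen_exists[OF ab(1)] obtain g where g: "g \<in> mgens I" "mdvd g a" by blast
  have "mdvd (mmult g (mprod ws)) (mmult a b)"
    using g(2) ws(3) by (auto simp: mdvd_def mmult_def add_mono)
  with ab(3) have "mdvd (mprod (g # ws)) c" using mdvd_trans by auto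
  with ws g show ?case by (intro exI[of _ "g # ws"]) auto
qed

lemma mpow_in: "p \<in> I \<Longrightarrow> mpow p n \<in> mideal_pow I n"
proof (induction n)
  case 0 then show ?case by (auto simp: mideal_def mpow_def mone_def mdvd_def)
next
  case (Suc n)
  then have "mmult p (mpow p n) \<in> {mmult u v | u v. u \<in> I \<and> v \<in> mideal_pow I n}" by blast
  then show ?case unfolding mpow_Suc mideal_pow.simps mideal_mult_def mideal_def using mdvd_refl by blast
qed

lemma dvd_le:
  assumes mo: "monomial_order mo" and d: "mdvd g m"
  shows "g = m \<or> mo g m"
proof -
  define z where "z = (\<lambda>k. m k - g k)"
  have m: "m = mmult z g" using d by (auto simp: z_def mmult_def mdvd_def)
  show ?thesis
  proof (cases "z = mone")
    case True then show ?thesis using m by simp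
  next
    case False
    then have "mo mone z" using mo by (auto simp: monomial_order_def)
    then have "mo (mmult mone g) (mmult z g)" using mo unfolding monomial_order_def by blast
    then show ?thesis using m by simp
  qed
qed

lemma prod_ge:
  assumes mo: "monomial_order mo"
  shows "(\<forall>w\<in>set ws. w = p \<or> mo p w) \<Longrightarrow>
     mprod ws = mpow p (length ws) \<or> mo (mpow p (length ws)) (mprod ws)"
proof (induction ws)
  case Nil then show ?case by (simp add: mpow_def mone_def)
next
  case (Cons w ws)
  let ?M = "mpow p (length ws)" and ?P = "mprod ws"
  have tr: "\<And>a b c. mo a b \<Longrightarrow> mo b c \<Longrightarrow> mo a c" and ml: "\<And>a b c. mo a b \<Longrightarrow> mo (mmult a c) (mmult b c)"
    using mo by (auto simp: monomial_order_def)
  from Cons have IH: "?P = ?M \<or> mo ?M ?P" by auto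
  have ml2: "\<And>a b c. mo a b \<Longrightarrow> mo (mmult c a) (mmult c b)" using ml mmult_comm by metis
  have goal: "mprod (w # ws) = mmult w ?P" "mpow p (length (w # ws)) = mmult p ?M"
    by (simp_all add: mpow_Suc)
  from Cons.prems have "w = p \<or> mo p w" by auto
  then show ?case
  proof
    assume "w = p"
    then show ?thesis using IH ml2 goal by metis
  next
    assume pw: "mo p w"
    then have a: "mo (mmult p ?M) (mmult w ?M)" using ml by blast
    show ?thesis
    proof (cases "?P = ?M")
      case True then show ?thesis using a goal by simp
    next
      case False
      then have "mo (mmult w ?M) (mmult w ?P)" using IH ml2 by blast
      then show ?thesis using a goal tr by metis
    qed
  qed
qed


theorem corollary2p8:
  fixes I :: "('a::finite) monomial set" and s :: nat
    and mo :: "'a monomial \<Rightarrow> 'a monomial \<Rightarrow> bool"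
  assumes "monomial_ideal I"
    and "squarefree_mideal I"
    and "\<forall>i. mvar i \<notin> I"
    and "s \<ge> 1"
    and "monomial_order mo"
    and "linear_quotients (mideal_pow I s) mo"
  shows "strong_gcd I"
proof -
  note mo = assms(5)
  have irr: "\<And>a. \<not> mo a a" and tr: "\<And>a b c. mo a b \<Longrightarrow> mo b c \<Longrightarrow> mo a c"
    and tot: "\<And>a b. a \<noteq> b \<Longrightarrow> mo a b \<or> mo b a"
    and ml: "\<And>a b c. mo a b \<Longrightarrow> mo (mmult a c) (mmult b c)"
    using mo unfolding monomial_order_def by blast+
  have sq: "\<And>w k. w \<in> mgens I \<Longrightarrow> w k \<le> 1" using assms(2) by (auto simp: squarefree_mideal_def)
  define J where "J = mideal_pow I s"
  obtain n where sn: "s = Suc n" using assms(4) by (cases s) auto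
  have lin: "strict_linear_on (mgens I) (\<lambda>u v. mo v u)"
    unfolding strict_linear_on_def using irr tr tot by blast
  have main: "\<exists>w\<in>mgens I. w \<noteq> p \<and> w \<noteq> q \<and> mo w p \<and> mdvd w (mmult p q)"
    if p: "p \<in> mgens I" and q: "q \<in> mgens I" and qp: "mo q p" and gcd: "mgcd p q = mone" for p q
  proof -
    have pI: "p \<in> I" and qI: "q \<in> I" using p q by (auto simp: mgens_def)
    have disj: "p k = 0 \<or> q k = 0" for k
    proof -
      have "min (p k) (q k) = 0" using gcd by (auto simp: mgcd_def mone_def fun_eq_iff)
      then show ?thesis by linarith
    qed
    have pne: "p \<noteq> mone"
    proof
      assume "p = mone"
      then have "mdvd p q" by (simp add: mdvd_def mone_def)
      then have "p = q" using q pI by (auto simp: mgens_def)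
      then show False using qp irr by simp
    qed
    define P where "P = mpow p s"
    have PJ: "P \<in> mgens J"
    proof -
      have "P \<in> J" using mpow_in[OF pI] by (simp add: P_def J_def)
      moreover have "v = P" if vJ: "v \<in> J" and vP: "mdvd v P" for v
      proof -
        obtain ws where ws: "length ws = s" "set ws \<subseteq> mgens I" "mdvd (mprod ws) v"
          using pow_struct vJ J_def by blast
        have "w = p" if w: "w \<in> set ws" for w
        proof -
          have wI: "w \<in> mgens I" using w ws by auto
          have "mdvd w P" using mdvd_mprod[OF w] ws(3) vP mdvd_trans by blast
          have "mdvd w p" unfolding mdvd_def
          proof
            fix k
            have "w k \<le> s * p k" using \<open>mdvd w P\<close> by (auto simp: mdvd_def P_def mpow_def)
            then show "w k \<le> p k" using sq[OF wI, of k] by (cases "p k") auto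
          qed
          then show ?thesis using wI p by (auto simp: mgens_def)
        qed
        then have "ws = replicate s p" using ws(1) by (metis length_replicate nth_equalityI nth_mem nth_replicate)
        then have "mdvd P v" using ws(3) by (simp add: mprod_replicate P_def)
        then show ?thesis using vP mdvd_antisym by blast
      qed
      ultimately show ?thesis by (auto simp: mgens_def)
    qed
    define m where "m = mmult q (mpow p n)"
    have mJ: "m \<in> J" unfolding J_def sn m_def mideal_pow.simps mideal_mult_def mideal_def
      using qI mpow_in[OF pI, of n] mdvd_refl by blast
    obtain g where g: "g \<in> mgens J" "mdvd g m" using gen_exists[OF mJ] by blast
    have "mo m P" unfolding m_def P_def sn mpow_Suc using ml[OF qp] by blast
    then have gP: "mo g P" using dvd_le[OF mo g(2)] tr by blast
    define E where "E = {u \<in> mgens J. mo u P}"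
    obtain V where V: "mcolon (mideal E) P = mideal (mvar ` V)"
      using assms(6) PJ unfolding linear_quotients_def J_def E_def by blast
    have "mdvd m (mmult q P)" by (auto simp: m_def P_def sn mpow_def mmult_def mdvd_def)
    then have "mmult q P \<in> mideal E" using g gP unfolding E_def mideal_def using mdvd_trans by blast
    then have "q \<in> mideal (mvar ` V)" using V unfolding mcolon_def by blast
    then obtain i where i: "i \<in> V" "mdvd (mvar i) q" by (auto simp: mideal_def)
    have "mvar i \<in> mideal (mvar ` V)" using i unfolding mideal_def using mdvd_refl by blast
    then have "mmult (mvar i) P \<in> mideal E" using V unfolding mcolon_def by blast
    then obtain c where c: "c \<in> mgens J" "mo c P" "mdvd c (mmult (mvar i) P)"
      by (auto simp: mideal_def E_def)
    have cJ: "c \<in> J" using c by (auto simp: mgens_def)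
    obtain ws where ws: "length ws = s" "set ws \<subseteq> mgens I" "mdvd (mprod ws) c"
      using pow_struct cJ J_def by blast
    have prodP: "mo (mprod ws) P" using dvd_le[OF mo ws(3)] c(2) tr by blast
    have qi: "q i \<ge> 1" using i(2) unfolding mdvd_def mvar_def by (metis (full_types))
    then have pi: "p i = 0" using disj by (metis not_one_le_zero)
    have wdvd: "mdvd w (mmult (mvar i) p)" if w: "w \<in> set ws" for w
    proof -
      have wI: "w \<in> mgens I" using w ws by auto
      have "mdvd w (mmult (mvar i) P)" using mdvd_mprod[OF w] ws(3) c(3) mdvd_trans by blast
      then have h: "w k \<le> mvar i k + s * p k" for k by (auto simp: mdvd_def P_def mpow_def mmult_def)
      show ?thesis unfolding mdvd_def
      proof
        fix k
        show "w k \<le> mmult (mvar i) p k"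
          using h[of k] sq[OF wI, of k] by (cases "p k"; simp add: mmult_def)
      qed
    qed
    have "\<exists>w\<in>set ws. w \<noteq> p \<and> mo w p"
    proof (rule ccontr)
      assume "\<not> ?thesis"
      then have "\<forall>w\<in>set ws. w = p \<or> mo p w" using tot by blast
      from prod_ge[OF mo this] ws(1) have "mprod ws = P \<or> mo P (mprod ws)" by (simp add: P_def)
      then show False using prodP irr tr by blast
    qed
    then obtain w where w: "w \<in> set ws" "w \<noteq> p" "mo w p" by blast
    have wI: "w \<in> mgens I" using w ws by auto
    have wd: "mdvd w (mmult (mvar i) p)" using wdvd[OF w(1)] .
    have "w \<noteq> q"
    proof
      assume wq: "w = q"
      have "mdvd q (mvar i)"
        unfolding mdvd_def
      proof
        fix k
        have "q k \<le> mvar i k + p k" using wd wq by (auto simp: mdvd_def mmult_def)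
        then show "q k \<le> mvar i k" using disj[of k] by auto
      qed
      then have "q = mvar i" using i(2) mdvd_antisym by blast
      then show False using qI assms(3) by blast
    qed
    moreover have "mdvd w (mmult p q)"
      unfolding mdvd_def
    proof
      fix k
      have "w k \<le> mvar i k + p k" using wd by (auto simp: mdvd_def mmult_def)
      moreover have "mvar i k \<le> q k" using i(2) by (auto simp: mdvd_def)
      ultimately show "w k \<le> mmult p q k" by (simp add: mmult_def)
    qed
    ultimately show ?thesis using wI w by blast
  qed
  show ?thesis unfolding strong_gcd_def
    apply (rule exI[of _ "\<lambda>u v. mo v u"])
    using lin main by blast
qed

end
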